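(* Let $(p,q),(r,s)\in\mathbb{Z}^2$ be such that the integers $A=p^2+q^2$ and $B=r^2+s^2$ are relatively prime, and let $\varphi$ be a rotation of $\mathbb{R}^2$ about the origin. Then $\varphi(p,q)\in\mathbb{Z}^2$ and $\varphi(r,s)\in\mathbb{Z}^2$ if and only if $\varphi$ is a rotation by an integer multiple of $\pi/2$. *)

theory Defs
  imports Complex_Main
begin

definition rot :: "real \<Rightarrow> real \<times> real \<Rightarrow> real \<times> real" where
  "rot t = (\<lambda>(x, y). (x * cos t - y * sin t, x * sin t + y * cos t))"

definition is_rotation :: "(real \<times> real \<Rightarrow> real \<times> real) \<Rightarrow> bool" where
  "is_rotation \<phi> \<longleftrightarrow> (\<exists>t. \<phi> = rot t)"

definition int_point :: "real \<times> real \<Rightarrow> bool" where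
  "int_point v \<longleftrightarrow> fst v \<in> \<int> \<and> snd v \<in> \<int>"

end

theory Submission
  imports Defs
begin

lemma rot_eq: "cos a = cos b \<Longrightarrow> sin a = sin b \<Longrightarrow> rot a = rot b"
  unfolding rot_def by simp

lemma cos_sin_half_int: "cos (of_int k * pi / 2) \<in> \<int> \<and> sin (of_int k * pi / 2) \<in> \<int>"
proof (induction k rule: int_induct[where k=0])
  case base then show ?case by simp
next
  case (step1 i)
  have e: "of_int (i+1) * pi / 2 = of_int i * pi / 2 + pi/2" by (simp add: field_simps)
  show ?case unfolding e using step1 by (simp add: cos_add sin_add)
next
  case (step2 i)
  have e: "of_int (i-1) * pi / 2 = of_int i * pi / 2 - pi/2" by (simp add: field_simps)
  show ?case unfolding e using step2 by (simp add: cos_diff sin_diff)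
qed

lemma key:
  fixes p q :: int and C S :: real
  assumes "p * C - q * S \<in> \<int>" "p * S + q * C \<in> \<int>"
  shows "C * of_int (p^2+q^2) \<in> \<int> \<and> S * of_int (p^2+q^2) \<in> \<int>"
proof -
  define a where "a = p * C - q * S"
  define b where "b = p * S + q * C"
  have "C * of_int (p^2+q^2) = of_int p * a + of_int q * b"
    unfolding a_def b_def by (simp add: algebra_simps power2_eq_square)
  moreover have "S * of_int (p^2+q^2) = of_int p * b - of_int q * a"
    unfolding a_def b_def by (simp add: algebra_simps power2_eq_square)
  ultimately show ?thesis using assms unfolding a_def[symmetric] b_def[symmetric]
    by auto
qed

lemma unit_int:
  fixes n m :: int
  assumes "n^2 + m^2 = 1"
  shows "(n = 1 \<and> m = 0) \<or> (n = 0 \<and> m = 1) \<or> (n = -1 \<and> m = 0) \<or> (n = 0 \<and> m = -1)"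
proof -
  have "n^2 \<le> 1" "m^2 \<le> 1" using assms zero_le_power2[of n] zero_le_power2[of m] by linarith+
  hence "\<bar>n\<bar> \<le> 1" "\<bar>m\<bar> \<le> 1"
    by (metis abs_le_square_iff abs_one power_one)+
  hence "n \<in> {-1,0,1}" "m \<in> {-1,0,1}" by auto
  thus ?thesis using assms by auto
qed

theorem mainTheorem11:
  fixes p q r s :: int and \<phi> :: "real \<times> real \<Rightarrow> real \<times> real"
  assumes "coprime (p^2 + q^2) (r^2 + s^2)"
    and "is_rotation \<phi>"
  shows "(int_point (\<phi> (of_int p, of_int q)) \<and> int_point (\<phi> (of_int r, of_int s)))
         \<longleftrightarrow> (\<exists>k::int. \<phi> = rot (of_int k * pi / 2))"
proof
  obtain t where t: "\<phi> = rot t" using assms(2) unfolding is_rotation_def by blast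
  assume h: "int_point (\<phi> (of_int p, of_int q)) \<and> int_point (\<phi> (of_int r, of_int s))"
  define C where "C = cos t"
  define S where "S = sin t"
  have k1: "C * of_int (p^2+q^2) \<in> \<int> \<and> S * of_int (p^2+q^2) \<in> \<int>"
    using h by (intro key) (auto simp: t rot_def int_point_def C_def S_def)
  have k2: "C * of_int (r^2+s^2) \<in> \<int> \<and> S * of_int (r^2+s^2) \<in> \<int>"
    using h by (intro key) (auto simp: t rot_def int_point_def C_def S_def)
  obtain u v where uv: "u * (p^2+q^2) + v * (r^2+s^2) = 1"
    using bezout_int[of "p^2+q^2" "r^2+s^2"] assms(1) by auto
  have uvr: "of_int u * of_int (p^2+q^2) + of_int v * of_int (r^2+s^2) = (1::real)"
    using arg_cong[OF uv, of "of_int :: int \<Rightarrow> real"] by simp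
  have "C = of_int u * (C * of_int (p^2+q^2)) + of_int v * (C * of_int (r^2+s^2))"
    using uvr by (simp add: algebra_simps) (metis distrib_left mult.assoc mult.commute mult_1_right)
  hence "C \<in> \<int>" using k1 k2 by (metis Ints_add Ints_mult Ints_of_int)
  then obtain n where n: "C = of_int n" by (auto elim: Ints_cases)
  have "S = of_int u * (S * of_int (p^2+q^2)) + of_int v * (S * of_int (r^2+s^2))"
    using uvr by (simp add: algebra_simps) (metis distrib_left mult.assoc mult.commute mult_1_right)
  hence "S \<in> \<int>" using k1 k2 by (metis Ints_add Ints_mult Ints_of_int)
  then obtain m where m: "S = of_int m" by (auto elim: Ints_cases)
  have "(of_int (n^2 + m^2) :: real) = 1"
  proof -
    have "(of_int (n^2 + m^2) :: real) = (cos t)^2 + (sin t)^2"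
      using n m C_def S_def by simp
    thus ?thesis by simp
  qed
  hence "n^2 + m^2 = 1" by (metis of_int_eq_1_iff)
  from unit_int[OF this] show "\<exists>k::int. \<phi> = rot (of_int k * pi / 2)"
  proof (elim disjE conjE)
    assume "n = 1" "m = 0" thus ?thesis using n m C_def S_def
      by (intro exI[of _ 0]) (auto simp: t intro!: rot_eq)
  next
    assume "n = 0" "m = 1" thus ?thesis using n m C_def S_def
      by (intro exI[of _ 1]) (auto simp: t intro!: rot_eq)
  next
    assume "n = -1" "m = 0" thus ?thesis using n m C_def S_def
      by (intro exI[of _ 2]) (auto simp: t intro!: rot_eq)
  next
    assume "n = 0" "m = -1" thus ?thesis using n m C_def S_def
      by (intro exI[of _ "-1"]) (auto simp: t intro!: rot_eq)
  qed
next
  assume "\<exists>k::int. \<phi> = rot (of_int k * pi / 2)"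
  then obtain k :: int where k: "\<phi> = rot (of_int k * pi / 2)" by blast
  from cos_sin_half_int[of k] show "int_point (\<phi> (of_int p, of_int q)) \<and> int_point (\<phi> (of_int r, of_int s))"
    by (auto simp: k rot_def int_point_def)
qed

end
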